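(* Let $\ell\ge1$ and let $w$ be an $\ell$-perfect word over $\{0,1\}$ such that $|w|$ is a multiple of $\ell2^{2\ell}$. Then there exists a $2\ell$-perfect word $z$ over $\{0,1\}$ of length $2|w|$ such that $\mathrm{even}(z)=w$.
   Context: For a finite word $z=a_1\cdots a_m$, $\mathrm{even}(z)=a_2a_4\cdots$ (symbols at even positions). For words $w,u$, $|w|^{al}_u=|\{i: w[i..i+|u|-1]=u,\ i\equiv1\bmod|u|\}|$. A finite binary word $w$ is $\ell$-perfect if $|w|$ is a multiple of $\ell$ and every word $u$ of length $\ell$ satisfies $|w|^{al}_u=|w|/(\ell2^\ell)$. *)

theory Defs
  imports Complex_Main
begin

(* Binary words are lists of bool (False = 0, True = 1). Positions are 0-indexed
   internally; the paper's 1-indexed position i corresponds to index i-1. *)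

(* even(z) = a_2 a_4 ... : symbols at even 1-indexed positions = odd 0-indexed indices *)
definition even_part :: "bool list \<Rightarrow> bool list" where
  "even_part z = [z ! i. i \<leftarrow> [0..<length z], odd i]"

(* |w|^{al}_u : number of 1-indexed i with i = 1 mod |u| and w[i..i+|u|-1] = u;
   in 0-indexed form j = i-1 with j mod |u| = 0 *)
definition al_count :: "bool list \<Rightarrow> bool list \<Rightarrow> nat" where
  "al_count w u = card {j. j + length u \<le> length w \<and> j mod length u = 0
                          \<and> take (length u) (drop j w) = u}"

definition perfect :: "nat \<Rightarrow> bool list \<Rightarrow> bool" where
  "perfect l w \<longleftrightarrow> l dvd length w \<and>
     (\<forall>u. length u = l \<longrightarrow> real (al_count w u) = real (length w) / (real l * 2 ^ l))"

end

theory Submission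
  imports Defs
begin

definition blk :: "nat \<Rightarrow> bool list \<Rightarrow> nat \<Rightarrow> bool list" where
  "blk L w k = take L (drop (k*L) w)"
definition evp :: "bool list \<Rightarrow> bool list" where
  "evp u = map (\<lambda>i. u!(2*i+1)) [0..<length u div 2]"
definition odp :: "bool list \<Rightarrow> bool list" where
  "odp u = map (\<lambda>i. u!(2*i)) [0..<length u div 2]"
definition il :: "bool list \<Rightarrow> bool list \<Rightarrow> bool list" where
  "il v u = map (\<lambda>i. if odd i then u!(i div 2) else v!(i div 2)) [0..<2*length u]"

lemma concat_if_single: "concat (map (\<lambda>i. if P i then [f i] else []) xs) = map f (filter P xs)"
  by (induction xs) auto

lemma filter_odd_upt: "filter odd [0..<m] = map (\<lambda>i. 2*i+1) [0..<m div 2]"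
proof (induction m)
  case 0 then show ?case by simp
next
  case (Suc m)
  show ?case
  proof (cases "odd m")
    case True
    then have "Suc m div 2 = Suc (m div 2)" by presburger
    moreover have "2*(m div 2)+1 = m" using True by presburger
    ultimately show ?thesis using Suc True by simp
  next
    case False
    then have "Suc m div 2 = m div 2" by presburger
    then show ?thesis using Suc False by simp
  qed
qed

lemma even_part_char: "even_part z = map (\<lambda>i. z!(2*i+1)) [0..<length z div 2]"
  unfolding even_part_def by (simp add: concat_if_single filter_odd_upt)

lemma il_evp_odp: "even (length u) \<Longrightarrow> il (odp u) (evp u) = u"
proof (rule nth_equalityI)
  assume e: "even (length u)"
  show "length (il (odp u) (evp u)) = length u" using e by (simp add: il_def evp_def)
  fix i assume "i < length (il (odp u) (evp u))"
  then have i: "i < length u" using e by (simp add: il_def evp_def)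
  have "i div 2 < length u div 2" using i e by auto
  then show "il (odp u) (evp u) ! i = u ! i"
    using i e by (auto simp: il_def evp_def odp_def)
qed

lemma evp_il: "length v = length u \<Longrightarrow> evp (il v u) = u"
  by (rule nth_equalityI) (auto simp: il_def evp_def)

lemma odp_il: "length v = length u \<Longrightarrow> odp (il v u) = v"
  by (rule nth_equalityI) (auto simp: il_def odp_def)

lemma il_inj: "length v = length u \<Longrightarrow> length v' = length u' \<Longrightarrow> il v u = il v' u' \<Longrightarrow> v = v' \<and> u = u'"
  by (metis evp_il odp_il)

lemma al_count_blk:
  assumes "0 < length u" "length u dvd length w"
  shows "al_count w u = card {k. k < length w div length u \<and> blk (length u) w k = u}"
proof -
  let ?L = "length u"
  have "{j. j + ?L \<le> length w \<and> j mod ?L = 0 \<and> take ?L (drop j w) = u}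
      = (\<lambda>k. k * ?L) ` {k. k < length w div ?L \<and> blk ?L w k = u}"
  proof (rule set_eqI, rule iffI)
    fix j assume "j \<in> {j. j + ?L \<le> length w \<and> j mod ?L = 0 \<and> take ?L (drop j w) = u}"
    then have j: "j + ?L \<le> length w" "j mod ?L = 0" "take ?L (drop j w) = u" by auto
    have jj: "j = (j div ?L) * ?L" using j(2) by (metis div_mult_mod_eq add_0_right)
    obtain c where c: "length w = c * ?L" using assms(2) by (metis dvd_def mult.commute)
    have "j div ?L * ?L < c * ?L" using j(1) jj c assms(1) by linarith
    then have "j div ?L < c" by (simp add: mult_less_cancel2)
    then show "j \<in> (\<lambda>k. k * ?L) ` {k. k < length w div ?L \<and> blk ?L w k = u}"
      using c assms(1) jj j(3) by (auto simp: blk_def intro!: image_eqI[of _ _ "j div ?L"])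
  next
    fix j assume "j \<in> (\<lambda>k. k * ?L) ` {k. k < length w div ?L \<and> blk ?L w k = u}"
    then obtain k where k: "j = k * ?L" "k < length w div ?L" "blk ?L w k = u" by auto
    obtain c where c: "length w = c * ?L" using assms(2) by (metis dvd_def mult.commute)
    have "Suc k \<le> c" using k(2) c assms(1) by simp
    then have "k * ?L + ?L \<le> c * ?L" by (metis mult_Suc mult_le_mono1 add.commute)
    then show "j \<in> {j. j + ?L \<le> length w \<and> j mod ?L = 0 \<and> take ?L (drop j w) = u}"
      using k c by (auto simp: blk_def)
  qed
  moreover have "inj_on (\<lambda>k. k * ?L) X" for X using assms(1) by (auto simp: inj_on_def)
  ultimately show ?thesis unfolding al_count_def by (simp add: card_image)
qed

lemma rank_bij:
  assumes "finite (S::nat set)"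
  shows "bij_betw (\<lambda>k. card {j\<in>S. j<k}) S {0..<card S}"
proof -
  let ?r = "\<lambda>k. card {j\<in>S. j<k}"
  have inj: "inj_on ?r S"
  proof (rule inj_onI)
    fix a b assume ab: "a \<in> S" "b \<in> S" "?r a = ?r b"
    show "a = b"
    proof (rule ccontr)
      assume "a \<noteq> b"
      then consider "a < b" | "b < a" by linarith
      then show False
      proof cases
        case 1
        have "{j\<in>S. j<a} \<subset> {j\<in>S. j<b}" using 1 ab by auto
        then have "?r a < ?r b" using assms by (intro psubset_card_mono) auto
        then show False using ab by simp
      next
        case 2
        have "{j\<in>S. j<b} \<subset> {j\<in>S. j<a}" using 2 ab by auto
        then have "?r b < ?r a" using assms by (intro psubset_card_mono) auto
        then show False using ab by simp
      qed
    qed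
  qed
  have sub: "?r ` S \<subseteq> {0..<card S}"
  proof
    fix x assume "x \<in> ?r ` S"
    then obtain k where k: "k \<in> S" "x = ?r k" by auto
    have "{j\<in>S. j<k} \<subset> S" using k by auto
    then have "?r k < card S" using assms by (intro psubset_card_mono) auto
    then show "x \<in> {0..<card S}" using k by simp
  qed
  have "card (?r ` S) = card {0..<card S}" using inj by (simp add: card_image)
  then have "?r ` S = {0..<card S}" using sub by (intro card_subset_eq) auto
  then show ?thesis using inj by (simp add: bij_betw_def)
qed

lemma count_div:
  assumes "c < d" shows "card {r. r < d*m \<and> r div m = (c::nat)} = m"
proof (cases "m = 0")
  case True then show ?thesis by simp
next
  case False
  have "{r. r < d*m \<and> r div m = c} = {c*m..<c*m+m}"
  proof (rule set_eqI)
    fix r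
    have "r div m = c \<longleftrightarrow> c*m \<le> r \<and> r < c*m+m" using False
      by (metis add_diff_inverse_nat diff_add_inverse2 div_less_iff_less_mult le_less_Suc_eq le_refl less_eq_div_iff_mult_less_eq mult_Suc not_add_less2 gr0I)
    moreover have "Suc c * m \<le> d*m" using assms by (intro mult_le_mono1) simp
    ultimately show "r \<in> {r. r < d*m \<and> r div m = c} \<longleftrightarrow> r \<in> {c*m..<c*m+m}" by auto
  qed
  then show ?thesis by simp
qed

lemma card_filter_bij:
  assumes "bij_betw r S T"
  shows "card {k\<in>S. P (r k)} = card {x\<in>T. P x}"
proof -
  have "r ` {k\<in>S. P (r k)} = {x\<in>T. P x}" using assms by (auto simp: bij_betw_def)
  moreover have "inj_on r {k\<in>S. P (r k)}" using assms by (auto simp: bij_betw_def inj_on_def)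
  ultimately show ?thesis by (metis card_image)
qed


theorem lemma10:
  fixes l :: nat and w :: "bool list"
  assumes "l \<ge> 1"
    and "perfect l w"
    and "(l * 2 ^ (2 * l)) dvd length w"
  shows "\<exists>z :: bool list. length z = 2 * length w \<and> perfect (2 * l) z \<and> even_part z = w"
proof -
  define n where "n = length w"
  obtain m where nm: "n = l * 2^(2*l) * m" using assms(3) n_def by (auto simp: dvd_def)
  define N where "N = 2^(2*l) * m"
  have p2: "(2::nat)^(2*l) = 2^l * 2^l" by (simp add: mult_2 power_add)
  have nN: "n = N * l" using nm N_def by simp
  have Ndiv: "n div l = N" using nN assms(1) by simp
  have ldvd: "l dvd n" using nN by simp
  have cntw: "card {k. k < N \<and> blk l w k = u} = 2^l * m" if "length u = l" for u
  proof -
    have "real (al_count w u) = real n / (real l * 2 ^ l)"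
      using assms(2) that n_def by (simp add: perfect_def)
    also have "\<dots> = real (2^l * m)" using assms(1) unfolding nm p2 by (simp add: field_simps)
    finally have "al_count w u = 2^l * m" by linarith
    moreover have "al_count w u = card {k. k < N \<and> blk l w k = u}"
      using al_count_blk[of u w] that assms(1) ldvd Ndiv n_def by simp
    ultimately show ?thesis by simp
  qed
  define Wd where "Wd = {xs::bool list. set xs \<subseteq> UNIV \<and> length xs = l}"
  have finWd: "finite Wd" unfolding Wd_def by (rule finite_lists_length_eq) simp
  have cardWd: "card Wd = 2^l" unfolding Wd_def using card_lists_length_eq[of "UNIV::bool set" l] by (simp add: card_UNIV_bool)
  obtain h where h: "bij_betw h {0..<(2::nat)^l} Wd" using ex_bij_betw_nat_finite[OF finWd] cardWd by auto
  define S where "S = (\<lambda>u. {j. j < N \<and> blk l w j = u})"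
  define rank where "rank = (\<lambda>k. card {j\<in>S (blk l w k). j < k})"
  define V where "V = (\<lambda>k. h (rank k div m))"
  have lenblk: "length (blk l w k) = l" if "k < N" for k
  proof -
    have "Suc k * l \<le> N * l" using that by (intro mult_le_mono1) simp
    then show ?thesis using nN n_def by (simp add: blk_def)
  qed
  have finS: "finite (S u)" for u unfolding S_def by simp
  have cardS: "card (S u) = 2^l * m" if "length u = l" for u using cntw[OF that] S_def by simp
  have rank_bij: "bij_betw (\<lambda>k. card {j\<in>S u. j<k}) (S u) {0..<card (S u)}" for u
    by (rule rank_bij[OF finS])
  have lenV: "V k \<in> Wd" if "k < N" for k
  proof -
    have kS: "k \<in> S (blk l w k)" using that S_def by simp
    have "rank k < card (S (blk l w k))"
      using bij_betw_apply[OF rank_bij kS] rank_def by simp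
    then have "rank k < 2^l * m" using cardS[OF lenblk[OF that]] by simp
    then have "rank k div m < 2^l" by (simp add: less_mult_imp_div_less)
    then show ?thesis using h V_def by (auto simp: bij_betw_def)
  qed
  define z where "z = map (\<lambda>i. if odd i then w!(i div 2) else V (i div (2*l)) ! ((i mod (2*l)) div 2)) [0..<2*n]"
  have lenz: "length z = 2 * n" by (simp add: z_def)
  have ev: "even_part z = w"
  proof (rule nth_equalityI)
    show "length (even_part z) = length w" by (simp add: even_part_char lenz n_def)
    fix i assume "i < length (even_part z)"
    then have i: "i < n" by (simp add: even_part_char lenz)
    then show "even_part z ! i = w ! i" by (simp add: even_part_char lenz z_def)
  qed
  have blkz: "blk (2*l) z k = il (V k) (blk l w k)" if k: "k < N" for k
  proof (rule nth_equalityI)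
    have "Suc k * (2*l) \<le> N * (2*l)" using k by (intro mult_le_mono1) simp
    then have len1: "k*(2*l) + 2*l \<le> 2*n" using nN by simp
    have lv: "length (V k) = l" using lenV[OF k] Wd_def by simp
    show "length (blk (2*l) z k) = length (il (V k) (blk l w k))"
      using len1 lenz lenblk[OF k] by (simp add: blk_def il_def)
    fix i assume "i < length (blk (2*l) z k)"
    then have i: "i < 2*l" using len1 lenz by (simp add: blk_def)
    have e1: "blk (2*l) z k ! i = z ! (k*(2*l) + i)" using i len1 lenz by (simp add: blk_def)
    have idx: "k*(2*l) + i < 2*n" using i len1 by linarith
    have d1: "(k*(2*l) + i) div (2*l) = k" using i by simp
    have d2: "(k*(2*l) + i) mod (2*l) = i" using i by simp
    have d3: "odd (k*(2*l) + i) = odd i" by simp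
    have d4: "(k*(2*l) + i) div 2 = k*l + i div 2" by simp
    have "i div 2 < l" using i by simp
    then have e2: "blk l w k ! (i div 2) = w ! (k*l + i div 2)"
      using lenblk[OF k] by (simp add: blk_def)
    show "blk (2*l) z k ! i = il (V k) (blk l w k) ! i"
      using e1 idx d1 d2 d3 d4 e2 i lenblk[OF k]
      by (simp add: z_def il_def)
  qed
  have perf: "perfect (2*l) z"
    unfolding perfect_def
  proof (intro conjI allI impI)
    show "2*l dvd length z" using lenz ldvd by simp
    fix u' :: "bool list" assume lu': "length u' = 2*l"
    define u where "u = evp u'"
    define v where "v = odp u'"
    have lu: "length u = l" using lu' by (simp add: u_def evp_def)
    have lv: "length v = l" using lu' by (simp add: v_def odp_def)
    have u'eq: "u' = il v u" using il_evp_odp[of u'] lu' u_def v_def by simp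
    have "v \<in> Wd" using lv Wd_def by simp
    then obtain c where c: "c < 2^l" "h c = v" using h by (auto simp: bij_betw_def)
    have "al_count z u' = card {k. k < 2*n div (2*l) \<and> blk (2*l) z k = u'}"
      using al_count_blk[of u' z] lu' lenz assms(1) ldvd by simp
    also have "2*n div (2*l) = N" using Ndiv by simp
    also have "{k. k < N \<and> blk (2*l) z k = u'} = {k\<in>S u. card {j\<in>S u. j<k} div m = c}"
    proof (rule set_eqI)
      fix k
      show "k \<in> {k. k < N \<and> blk (2*l) z k = u'} \<longleftrightarrow> k \<in> {k\<in>S u. card {j\<in>S u. j<k} div m = c}"
      proof (cases "k < N")
        case True
        have lV: "length (V k) = l" using lenV[OF True] Wd_def by simp
        have "blk (2*l) z k = u' \<longleftrightarrow> V k = v \<and> blk l w k = u"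
          using blkz[OF True] u'eq il_inj[of "V k" "blk l w k" v u] lV lenblk[OF True] lu lv by auto
        moreover have "blk l w k = u \<Longrightarrow> V k = v \<longleftrightarrow> card {j\<in>S u. j<k} div m = c"
        proof -
          assume b: "blk l w k = u"
          have kS: "k \<in> S u" using b True S_def by simp
          have "rank k < card (S u)" using bij_betw_apply[OF rank_bij kS] rank_def b by simp
          then have "rank k div m < 2^l" using cardS[OF lu] by (simp add: less_mult_imp_div_less)
          then have "V k = v \<longleftrightarrow> rank k div m = c"
            using h c unfolding V_def bij_betw_def inj_on_def by auto
          then show ?thesis using rank_def b by simp
        qed
        ultimately show ?thesis using True S_def by auto
      next
        case False then show ?thesis using S_def by simp
      qed
    qed
    also have "card \<dots> = card {x\<in>{0..<card (S u)}. x div m = c}"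
      by (rule card_filter_bij[OF rank_bij])
    also have "{x\<in>{0..<card (S u)}. x div m = c} = {r. r < 2^l*m \<and> r div m = c}"
      using cardS[OF lu] by auto
    also have "card \<dots> = m" using count_div[OF c(1)] by simp
    finally have "al_count z u' = m" .
    then show "real (al_count z u') = real (length z) / (real (2*l) * 2 ^ (2*l))"
      using lenz assms(1) unfolding nm by (simp add: field_simps)
  qed
  show ?thesis using lenz perf ev n_def by blast
qed

end
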